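(* Let $n\ge 1$, let $G\in\mathcal{G}_{2n}$, and let $M_s$ be a perfect matching of $G$ with $f(G,M_s)=n-1$. Then for every perfect matching $M$ of $G$, $M_s$ can be obtained from $M$ by a finite sequence of matching 2-switches (possibly empty).
   Context: All graphs are finite and simple. $\mathcal{G}_{2n}$ denotes the set of all graphs with $2n$ vertices that have a perfect matching. For a perfect matching $M$ of $G$, a forcing set of $M$ is a subset $S\subseteq M$ contained in no other perfect matching of $G$; $f(G,M)$ is the minimum size of a forcing set of $M$. A cycle is $M$-alternating if its edges alternate between $M$ and $E(G)\setminus M$. If $C$ is an $M$-alternating cycle of length $4$, the perfect matching $M\oplus E(C)=(M\setminus E(C))\cup(E(C)\setminus M)$ is said to be obtained from $M$ by a matching 2-switch. *)

theory Defs
  imports Main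
begin

definition simple_graph :: "'a set \<Rightarrow> 'a set set \<Rightarrow> bool" where
  "simple_graph V E \<longleftrightarrow> finite V \<and> (\<forall>e\<in>E. e \<subseteq> V \<and> card e = 2)"

definition perfect_matching :: "'a set \<Rightarrow> 'a set set \<Rightarrow> 'a set set \<Rightarrow> bool" where
  "perfect_matching V E M \<longleftrightarrow> M \<subseteq> E \<and> (\<forall>v\<in>V. \<exists>!e. e \<in> M \<and> v \<in> e)"

definition forcing_set :: "'a set \<Rightarrow> 'a set set \<Rightarrow> 'a set set \<Rightarrow> 'a set set \<Rightarrow> bool" where
  "forcing_set V E M S \<longleftrightarrow> S \<subseteq> M \<and>
     (\<forall>M'. perfect_matching V E M' \<and> S \<subseteq> M' \<longrightarrow> M' = M)"

text \<open>Forcing number f(G,M): minimum size of a forcing set of M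
(M itself is always a forcing set, so the minimum exists).\<close>
definition forcing_number :: "'a set \<Rightarrow> 'a set set \<Rightarrow> 'a set set \<Rightarrow> nat" where
  "forcing_number V E M = (LEAST k. \<exists>S. forcing_set V E M S \<and> card S = k)"

text \<open>A matching 2-switch: C = a b c d a is an M-alternating 4-cycle with
ab, cd in M and bc, da in E - M; the result is M xor E(C).\<close>
definition matching_2switch :: "'a set set \<Rightarrow> 'a set set \<Rightarrow> 'a set set \<Rightarrow> bool" where
  "matching_2switch E M M' \<longleftrightarrow>
     (\<exists>a b c d. distinct [a, b, c, d] \<and>
        {a, b} \<in> M \<and> {c, d} \<in> M \<and>
        {b, c} \<in> E \<and> {b, c} \<notin> M \<and> {d, a} \<in> E \<and> {d, a} \<notin> M \<and>
        M' = (M - {{a, b}, {c, d}}) \<union> {{b, c}, {d, a}})"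

end

theory Submission
  imports Defs
begin


definition pmx :: "'a set set \<Rightarrow> 'a set \<Rightarrow> 'a set set \<Rightarrow> bool" where
  "pmx E V M \<longleftrightarrow> M \<subseteq> E \<and> (\<forall>e\<in>M. e \<subseteq> V) \<and> (\<forall>v\<in>V. \<exists>!e. e \<in> M \<and> v \<in> e)"

lemma pmx_uniq: "pmx E V M \<Longrightarrow> e\<in>M \<Longrightarrow> f\<in>M \<Longrightarrow> v\<in>e \<Longrightarrow> v\<in>f \<Longrightarrow> e = f"
  unfolding pmx_def by blast

lemma pair_eq_uniq: "{x,y} = {x,z} \<Longrightarrow> y = z"
  by (metis doubleton_eq_iff)

lemma mate_uniq: "pmx E V M \<Longrightarrow> {x,y}\<in>M \<Longrightarrow> {x,z}\<in>M \<Longrightarrow> y = z"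
proof -
  assume a: "pmx E V M" "{x,y}\<in>M" "{x,z}\<in>M"
  have "{x,y} = {x,z}" using pmx_uniq[OF a, of x] by simp
  then show ?thesis by (rule pair_eq_uniq)
qed

lemma card2_neq: assumes "\<forall>e\<in>E. card e = 2" "{x,y}\<in>E" shows "x\<noteq>y"
proof
  assume "x = y" then have "card {x,y} = 1" by simp
  with assms show False by fastforce
qed

lemma mate_ex: assumes "pmx E V M" "\<forall>e\<in>E. card e = 2" "v\<in>V" shows "\<exists>u. {v,u}\<in>M"
proof -
  obtain e where e: "e\<in>M" "v\<in>e" using assms unfolding pmx_def by blast
  have "card e = 2" using assms(1,2) e unfolding pmx_def by blast
  then obtain x y where "e = {x,y}" by (meson card_2_iff)
  then have "v = x \<or> v = y" using e by blast
  then show ?thesis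
  proof
    assume "v = x" then show ?thesis using e \<open>e={x,y}\<close> by blast
  next
    assume "v = y" then have "{v,x} = e" using \<open>e={x,y}\<close> by blast
    then show ?thesis using e by blast
  qed
qed

lemma sw_intro:
  assumes pm: "pmx E V M" and c2: "\<forall>e\<in>E. card e=2" and h: "{a,b}\<in>M" "{c,d}\<in>M" "{a,b}\<noteq>{c,d}" "{b,c}\<in>E" "{d,a}\<in>E"
  shows "matching_2switch E M (M - {{a,b},{c,d}} \<union> {{b,c},{d,a}})"
proof -
  have ME: "M \<subseteq> E" using pm unfolding pmx_def by blast
  have ab: "a\<noteq>b" using card2_neq[OF c2] h ME by blast
  have cd: "c\<noteq>d" using card2_neq[OF c2] h ME by blast
  have ca: "c\<noteq>a" using mate_uniq[OF pm, of a b d] h by blast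
  have cb: "c\<noteq>b" using mate_uniq[OF pm, of b a d] h by (metis insert_commute)
  have da: "d\<noteq>a" using mate_uniq[OF pm, of a b c] h by (metis insert_commute)
  have db: "d\<noteq>b" using mate_uniq[OF pm, of b a c] h by (metis insert_commute)
  have bc: "{b,c}\<notin>M" using mate_uniq[OF pm, of b a c] h ca by (metis insert_commute)
  have dA: "{d,a}\<notin>M" using mate_uniq[OF pm, of a b d] h db by (metis insert_commute)
  show ?thesis unfolding matching_2switch_def
    apply (rule exI[of _ a], rule exI[of _ b], rule exI[of _ c], rule exI[of _ d])
    using ab cd ca cb da db bc dA h by auto
qed

lemma sw_pmx:
  assumes pm: "pmx E V M" and s: "matching_2switch E M M'"
  shows "pmx E V M'"
proof -
  obtain a b c d where d: "distinct [a,b,c,d]" "{a,b}\<in>M" "{c,d}\<in>M" "{b,c}\<in>E" "{d,a}\<in>E"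
     and M': "M' = M - {{a,b},{c,d}} \<union> {{b,c},{d,a}}"
    using s unfolding matching_2switch_def by blast
  have ME: "M \<subseteq> E" and sub: "\<forall>e\<in>M. e\<subseteq>V" using pm unfolding pmx_def by blast+
  have V: "a\<in>V" "b\<in>V" "c\<in>V" "d\<in>V" using sub d by auto
  have U: "\<exists>!e. e \<in> M' \<and> v \<in> e" if v: "v\<in>V" for v
  proof (cases "v\<in>{a,b,c,d}")
    case True
    then consider (A) "v=a" | (B) "v=b" | (C) "v=c" | (D) "v=d" by blast
    then show ?thesis
    proof cases
      case A
      show ?thesis
      proof (rule ex1I[of _ "{d,a}"])
        show "{d,a} \<in> M' \<and> v \<in> {d,a}" using M' A by auto
        fix g assume g: "g\<in>M' \<and> v\<in>g"
        show "g = {d,a}"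
        proof (rule ccontr)
          assume ne: "g\<noteq>{d,a}"
          have "g \<in> M - {{a,b},{c,d}} \<or> g = {b,c}" using g M' ne by auto
          then show False
          proof
            assume "g \<in> M - {{a,b},{c,d}}"
            then show False using pmx_uniq[OF pm, of g "{a,b}" a] g A d by auto
          next
            assume "g = {b,c}" then show False using g A d by auto
          qed
        qed
      qed
    next
      case B
      show ?thesis
      proof (rule ex1I[of _ "{b,c}"])
        show "{b,c} \<in> M' \<and> v \<in> {b,c}" using M' B by auto
        fix g assume g: "g\<in>M' \<and> v\<in>g"
        show "g = {b,c}"
        proof (rule ccontr)
          assume ne: "g\<noteq>{b,c}"
          have "g \<in> M - {{a,b},{c,d}} \<or> g = {d,a}" using g M' ne by auto
          then show False
          proof
            assume "g \<in> M - {{a,b},{c,d}}"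
            then show False using pmx_uniq[OF pm, of g "{a,b}" b] g B d by auto
          next
            assume "g = {d,a}" then show False using g B d by auto
          qed
        qed
      qed
    next
      case C
      show ?thesis
      proof (rule ex1I[of _ "{b,c}"])
        show "{b,c} \<in> M' \<and> v \<in> {b,c}" using M' C by auto
        fix g assume g: "g\<in>M' \<and> v\<in>g"
        show "g = {b,c}"
        proof (rule ccontr)
          assume ne: "g\<noteq>{b,c}"
          have "g \<in> M - {{a,b},{c,d}} \<or> g = {d,a}" using g M' ne by auto
          then show False
          proof
            assume "g \<in> M - {{a,b},{c,d}}"
            then show False using pmx_uniq[OF pm, of g "{c,d}" c] g C d by auto
          next
            assume "g = {d,a}" then show False using g C d by auto
          qed
        qed
      qed
    next
      case D
      show ?thesis
      proof (rule ex1I[of _ "{d,a}"])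
        show "{d,a} \<in> M' \<and> v \<in> {d,a}" using M' D by auto
        fix g assume g: "g\<in>M' \<and> v\<in>g"
        show "g = {d,a}"
        proof (rule ccontr)
          assume ne: "g\<noteq>{d,a}"
          have "g \<in> M - {{a,b},{c,d}} \<or> g = {b,c}" using g M' ne by auto
          then show False
          proof
            assume "g \<in> M - {{a,b},{c,d}}"
            then show False using pmx_uniq[OF pm, of g "{c,d}" d] g D d by auto
          next
            assume "g = {b,c}" then show False using g D d by auto
          qed
        qed
      qed
    qed
  next
    case False
    obtain e where e: "e\<in>M" "v\<in>e" using pm v unfolding pmx_def by blast
    have eM': "e\<in>M'" using e False M' by auto
    show ?thesis
    proof (rule ex1I[of _ e])
      show "e\<in>M' \<and> v\<in>e" using eM' e by blast
      fix g assume g: "g\<in>M' \<and> v\<in>g"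
      then have "g\<in>M" using False M' by auto
      then show "g = e" using pmx_uniq[OF pm, of g e v] g e by blast
    qed
  qed
  have "M' \<subseteq> E" using ME M' d by auto
  moreover have "\<forall>e\<in>M'. e\<subseteq>V" using sub M' V by auto
  ultimately show ?thesis using U by (simp add: pmx_def)
qed

lemma sw_pmx_rt: "(matching_2switch E)\<^sup>*\<^sup>* M M' \<Longrightarrow> pmx E V M \<Longrightarrow> pmx E V M'"
  by (induction rule: rtranclp_induct) (auto intro: sw_pmx)



lemma sw_sub: "matching_2switch E M M' \<Longrightarrow> \<forall>f\<in>M. f \<subseteq> W \<Longrightarrow> \<forall>f\<in>M'. f \<subseteq> W"
  unfolding matching_2switch_def by auto

lemma sw_lift:
  assumes s: "matching_2switch E M M'" and W: "\<forall>f\<in>M. f \<subseteq> W" and e: "e \<inter> W = {}" "e \<noteq> {}"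
  shows "matching_2switch E (insert e M) (insert e M')"
proof -
  obtain a b c d where d: "distinct [a,b,c,d]" "{a,b}\<in>M" "{c,d}\<in>M" "{b,c}\<in>E" "{b,c}\<notin>M"
     "{d,a}\<in>E" "{d,a}\<notin>M" and M': "M' = M - {{a,b},{c,d}} \<union> {{b,c},{d,a}}"
    using s unfolding matching_2switch_def by blast
  have V: "a\<in>W" "b\<in>W" "c\<in>W" "d\<in>W" using W d by auto
  have n1: "e \<noteq> {b,c}" "e \<noteq> {d,a}" "e \<noteq> {a,b}" "e\<noteq>{c,d}" using e V by auto
  have eq: "insert e M' = insert e M - {{a,b},{c,d}} \<union> {{b,c},{d,a}}" using M' n1 by blast
  have f: "{b,c} \<notin> insert e M" "{d,a} \<notin> insert e M" using n1 d by blast+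
  have g: "{a,b} \<in> insert e M" "{c,d} \<in> insert e M" using d by blast+
  show ?thesis unfolding matching_2switch_def
    apply (rule exI[of _ a], rule exI[of _ b], rule exI[of _ c], rule exI[of _ d])
    using d(1,4,6) eq f g by simp
qed

lemma sw_lift_rt:
  assumes "(matching_2switch E)\<^sup>*\<^sup>* M M'" "\<forall>f\<in>M. f \<subseteq> W" "e \<inter> W = {}" "e \<noteq> {}"
  shows "(matching_2switch E)\<^sup>*\<^sup>* (insert e M) (insert e M')"
proof -
  have "(matching_2switch E)\<^sup>*\<^sup>* (insert e M) (insert e M') \<and> (\<forall>f\<in>M'. f \<subseteq> W)"
    using assms(1)
  proof (induction rule: rtranclp_induct)
    case base then show ?case using assms by simp
  next
    case (step y z)
    then show ?case using sw_lift[OF step(2) _ assms(3,4)] sw_sub[OF step(2)]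
      by (meson rtranclp.rtrancl_into_rtrancl)
  qed
  then show ?thesis by blast
qed

definition Pprop :: "'a set set \<Rightarrow> 'a set set \<Rightarrow> bool" where
  "Pprop E Ms \<longleftrightarrow> (\<forall>e\<in>Ms. \<forall>f\<in>Ms. e\<noteq>f \<longrightarrow> (\<exists>a b c d. e={a,b} \<and> f={c,d} \<and> {a,c}\<in>E \<and> {b,d}\<in>E))"

lemma Pcases:
  assumes "Pprop E Ms" "{a,b}\<in>Ms" "{c,d}\<in>Ms" "{a,b}\<noteq>{c,d}"
  shows "({a,c}\<in>E \<and> {b,d}\<in>E) \<or> ({a,d}\<in>E \<and> {b,c}\<in>E)"
proof -
  have H: "\<forall>e\<in>Ms. \<forall>f\<in>Ms. e\<noteq>f \<longrightarrow> (\<exists>a b c d. e={a,b} \<and> f={c,d} \<and> {a,c}\<in>E \<and> {b,d}\<in>E)"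
    using assms(1) unfolding Pprop_def .
  obtain p q r s where h: "{a,b}={p,q}" "{c,d}={r,s}" "{p,r}\<in>E" "{q,s}\<in>E"
    using H[rule_format, OF assms(2) assms(3) assms(4)] by blast
  have 1: "(a=p \<and> b=q) \<or> (a=q \<and> b=p)" using h(1) unfolding doubleton_eq_iff .
  have 2: "(c=r \<and> d=s) \<or> (c=s \<and> d=r)" using h(2) unfolding doubleton_eq_iff .
  from 1 2 show ?thesis
  proof (elim disjE conjE)
    assume "a=p" "b=q" "c=r" "d=s" then show ?thesis using h by simp
  next
    assume "a=p" "b=q" "c=s" "d=r" then show ?thesis using h by simp
  next
    assume "a=q" "b=p" "c=r" "d=s" then show ?thesis using h by simp
  next
    assume "a=q" "b=p" "c=s" "d=r" then show ?thesis using h by (simp add: insert_commute)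
  qed
qed

lemma Pprop_sub: "Pprop E Ms \<Longrightarrow> Ms' \<subseteq> Ms \<Longrightarrow> Pprop E Ms'"
  unfolding Pprop_def by blast

lemma pmx_remove:
  assumes pm: "pmx E V M" and e: "e\<in>M"
  shows "pmx E (V - e) (M - {e})"
proof -
  have "M - {e} \<subseteq> E" using pm unfolding pmx_def by blast
  moreover have "\<forall>f\<in>M - {e}. f \<subseteq> V - e"
  proof
    fix f assume f: "f \<in> M - {e}"
    have "f \<subseteq> V" using pm f unfolding pmx_def by blast
    moreover have "f \<inter> e = {}" using pmx_uniq[OF pm, of f e] f e by blast
    ultimately show "f \<subseteq> V - e" by blast
  qed
  moreover have "\<exists>!g. g \<in> M - {e} \<and> v \<in> g" if v: "v \<in> V - e" for v
  proof -
    obtain g where g: "g\<in>M" "v\<in>g" using pm v unfolding pmx_def by blast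
    have "g \<noteq> e" using g v by blast
    show ?thesis
    proof (rule ex1I[of _ g])
      show "g \<in> M - {e} \<and> v \<in> g" using g \<open>g\<noteq>e\<close> by blast
      fix h assume "h \<in> M - {e} \<and> v \<in> h"
      then show "h = g" using pmx_uniq[OF pm, of h g v] g by blast
    qed
  qed
  ultimately show ?thesis by (simp add: pmx_def)
qed

lemma one_step:
  assumes pm: "pmx E V M" and c2: "\<forall>e\<in>E. card e = 2" and h: "{a,b}\<in>E" "{a,b}\<notin>M" "{x,a}\<in>M" "{b,y}\<in>M" "{x,y}\<in>E"
  shows "\<exists>M'. matching_2switch E M M' \<and> pmx E V M' \<and> {a,b} \<in> M'"
proof -
  have ab: "a\<noteq>b" using card2_neq[OF c2 h(1)] .
  have ne: "{x,a}\<noteq>{b,y}"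
  proof
    assume eq: "{x,a} = {b,y}"
    then have "a = y" using ab by (metis doubleton_eq_iff)
    then have "x = b" using eq ab by (metis doubleton_eq_iff)
    then show False using h \<open>a=y\<close> by (metis insert_commute)
  qed
  have "{y,x}\<in>E" using h by (metis insert_commute)
  then have s: "matching_2switch E M (M - {{x,a},{b,y}} \<union> {{a,b},{y,x}})"
    using sw_intro[OF pm c2 h(3) h(4) ne h(1)] by simp
  show ?thesis using s sw_pmx[OF pm s] by blast
qed



lemma mate_uniq3: "pmx E V M \<Longrightarrow> {x,y}\<in>M \<Longrightarrow> {z,x}\<in>M \<Longrightarrow> y = z"
  by (metis insert_commute mate_uniq)

lemma mate_uniq2: "pmx E V M \<Longrightarrow> {y,x}\<in>M \<Longrightarrow> {z,x}\<in>M \<Longrightarrow> y = z"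
  by (metis insert_commute mate_uniq)

lemma pmx_E: "pmx E V M \<Longrightarrow> M \<subseteq> E"
  unfolding pmx_def by blast

lemma pmx_V: "pmx E V M \<Longrightarrow> {x,y} \<in> M \<Longrightarrow> x \<in> V \<and> y \<in> V"
  unfolding pmx_def by blast

lemma par2:
  assumes pM: "pmx E V M" and pS: "pmx E V Ms" and c2: "\<forall>e\<in>E. card e = 2" and P: "Pprop E Ms"
    and h: "{u0,v0}\<in>Ms" "{v0,u1}\<in>M" "{u1,v1}\<in>Ms" "{v1,u2}\<in>M" "{u2,v2}\<in>Ms" "{v0,u2}\<notin>E"
  shows "{u0,u2}\<in>E \<and> {v0,v2}\<in>E"
proof -
  have SE: "Ms \<subseteq> E" using pmx_E[OF pS] .
  have n1: "u2 \<noteq> v0"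
  proof
    assume "u2 = v0"
    then have "u1 = v1" using mate_uniq3[OF pM h(2), of v1] h(4) by simp
    then show False using card2_neq[OF c2, of u1 v1] h(3) SE by blast
  qed
  have n2: "u2 \<noteq> u0"
  proof
    assume "u2 = u0"
    then have "{v0,u2} \<in> E" using h(1) SE by (simp add: insert_commute subset_iff)
    then show False using h(6) by blast
  qed
  have ne: "{u0,v0} \<noteq> {u2,v2}" using n1 n2 by (metis insertCI insertE singletonD)
  from Pcases[OF P h(1) h(5) ne] show ?thesis using h(6) by (metis insert_commute)
qed



lemma local_step:
  assumes pM: "pmx E V M" and pS: "pmx E V Ms" and c2: "\<forall>e\<in>E. card e = 2" and P: "Pprop E Ms"
    and disj: "M \<inter> Ms = {}" and e0: "{a0,b0}\<in>Ms"
  shows "\<exists>M'. (matching_2switch E)\<^sup>*\<^sup>* M M' \<and> pmx E V M' \<and> M' \<inter> Ms \<noteq> {}"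
    (is "?G")
proof -
  have SE: "Ms \<subseteq> E" using pmx_E[OF pS] .
  have ME: "M \<subseteq> E" using pmx_E[OF pM] .
  have djs: "\<And>x y. {x,y}\<in>M \<Longrightarrow> {x,y}\<notin>Ms" using disj by blast
  have djs2: "\<And>x y. {x,y}\<in>M \<Longrightarrow> {y,x}\<notin>Ms" using djs by (metis insert_commute)
  have nS: "\<And>x y. {x,y}\<in>Ms \<Longrightarrow> x\<noteq>y" using card2_neq[OF c2] SE by blast
  have nM: "\<And>x y. {x,y}\<in>M \<Longrightarrow> x\<noteq>y" using card2_neq[OF c2] ME by blast
  have SEc: "\<And>x y. {x,y}\<in>Ms \<Longrightarrow> {y,x}\<in>E" using SE by (metis insert_commute subsetD)
  have OS: "?G" if h: "{a,b}\<in>Ms" "{x,a}\<in>M" "{b,y}\<in>M" "{x,y}\<in>E" for a b x y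
  proof -
    have "{a,b} \<in> E" using h SE by blast
    moreover have "{a,b}\<notin>M" using h disj by blast
    ultimately obtain M' where "matching_2switch E M M'" "pmx E V M'" "{a,b}\<in>M'"
      using one_step[OF pM c2 _ _ h(2,3,4)] by blast
    then show ?thesis using h(1) by blast
  qed
  have OS2: "?G" if sw: "matching_2switch E M M1" and h: "{a,b}\<in>Ms" "{a,b}\<notin>M1" "{x,a}\<in>M1" "{b,y}\<in>M1" "{x,y}\<in>E"
    for M1 a b x y
  proof -
    have p1: "pmx E V M1" using sw_pmx[OF pM sw] .
    have "{a,b} \<in> E" using h SE by blast
    then obtain M' where "matching_2switch E M1 M'" "pmx E V M'" "{a,b}\<in>M'"
      using one_step[OF p1 c2 _ h(2,3,4,5)] by blast
    moreover have "(matching_2switch E)\<^sup>*\<^sup>* M M'" using sw calculation(1) by auto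
    ultimately show ?thesis using h(1) by blast
  qed
  have "b0 \<in> V" using pmx_V[OF pS e0] by blast
  then obtain a1 where m0: "{b0,a1}\<in>M" using mate_ex[OF pM c2] by blast
  then have "a1 \<in> V" using pmx_V[OF pM] by blast
  then obtain b1 where s1: "{a1,b1}\<in>Ms" using mate_ex[OF pS c2] by blast
  then have "b1 \<in> V" using pmx_V[OF pS] by blast
  then obtain a2 where m1: "{b1,a2}\<in>M" using mate_ex[OF pM c2] by blast
  then have "a2 \<in> V" using pmx_V[OF pM] by blast
  then obtain b2 where s2: "{a2,b2}\<in>Ms" using mate_ex[OF pS c2] by blast
  then have "b2 \<in> V" using pmx_V[OF pS] by blast
  then obtain a3 where m2: "{b2,a3}\<in>M" using mate_ex[OF pM c2] by blast
  then have "a3 \<in> V" using pmx_V[OF pM] by blast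
  then obtain b3 where s3: "{a3,b3}\<in>Ms" using mate_ex[OF pS c2] by blast
  then have "b3 \<in> V" using pmx_V[OF pS] by blast
  then obtain a4 where m3: "{b3,a4}\<in>M" using mate_ex[OF pM c2] by blast
  then have "a4 \<in> V" using pmx_V[OF pM] by blast
  then obtain b4 where s4: "{a4,b4}\<in>Ms" using mate_ex[OF pS c2] by blast
  show ?G
  proof (cases "{b0,a2}\<in>E")
    case True show ?thesis by (rule OS[OF s1 m0 m1 True])
  next
    case nE1: False
    have F1: "{a0,a2}\<in>E \<and> {b0,b2}\<in>E" using par2[OF pM pS c2 P e0 m0 s1 m1 s2 nE1] .
    show ?thesis
    proof (cases "{b1,a3}\<in>E")
      case True show ?thesis by (rule OS[OF s2 m1 m2 True])
    next
      case nE2: False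
      have F2: "{a1,a3}\<in>E \<and> {b1,b3}\<in>E" using par2[OF pM pS c2 P s1 m1 s2 m2 s3 nE2] .
      have d1: "a1 \<noteq> b2"
      proof
        assume "a1 = b2"
        then have "b1 = a2" using mate_uniq3[OF pS s1, of a2] s2 by simp
        then show False using nM[OF m1] by simp
      qed
      have d2: "a1 \<noteq> a3"
      proof
        assume "a1 = a3"
        then have "b2 = b0" using mate_uniq2[OF pM m2, of b0] m0 by simp
        then have "a2 = a0" using mate_uniq2[OF pS s2, of a0] e0 by simp
        then show False using nE1 SEc[OF e0] by simp
      qed
      have db1a3: "b1 \<noteq> a3"
      proof
        assume "b1 = a3"
        then have "a2 = b2" using mate_uniq3[OF pM m1, of b2] m2 by simp
        then show False using nS[OF s2] by simp
      qed
      have db1b0: "b1 \<noteq> b0"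
      proof
        assume "b1 = b0"
        then have "a1 = a0" using mate_uniq2[OF pS s1, of a0] e0 by simp
        then show False using djs2[OF m0] e0 by simp
      qed
      have db1b2: "b1 \<noteq> b2"
      proof
        assume "b1 = b2"
        then have "a1 = a2" using mate_uniq2[OF pS s1, of a2] s2 by simp
        then show False using djs2[OF m1] s1 by simp
      qed
      have ne1: "{a1,b0} \<noteq> {b2,a3}" using d1 d2 by (metis insertCI insertE singletonD)
      have m0c: "{a1,b0}\<in>M" using m0 by (simp add: insert_commute)
      have e31: "{a3,a1}\<in>E" using F2 by (simp add: insert_commute)
      define M1 where "M1 = M - {{a1,b0},{b2,a3}} \<union> {{b0,b2},{a3,a1}}"
      have sw1: "matching_2switch E M M1"
        unfolding M1_def using sw_intro[OF pM c2 m0c m2 ne1 _ e31] F1 by blast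
      have inM1: "e \<in> M1" if "e\<in>M" "e \<noteq> {a1,b0}" "e \<noteq> {b2,a3}" for e
        using that unfolding M1_def by blast
      have a31M1: "{a3,a1} \<in> M1" unfolding M1_def by blast
      show ?thesis
      proof (cases "{a2,a3}\<in>E")
        case True
        have "{b1,a2} \<noteq> {a1,b0}" using nS[OF s1] db1b0 by (metis insertCI insertE singletonD)
        moreover have "{b1,a2} \<noteq> {b2,a3}" using db1b2 db1a3 by (metis insertCI insertE singletonD)
        ultimately have x1: "{b1,a2} \<in> M1" using inM1 m1 by blast
        have "{a1,b1}\<notin>M" using disj s1 by blast
        moreover have "{a1,b1} \<noteq> {b0,b2}" using nM[OF m0] d1 by (metis insertCI insertE singletonD)
        moreover have "{a1,b1} \<noteq> {a3,a1}" using db1a3 nS[OF s1] by (metis insertCI insertE singletonD)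
        ultimately have x2: "{a1,b1} \<notin> M1" unfolding M1_def by blast
        have x3: "{a3,a2}\<in>E" using True by (simp add: insert_commute)
        show ?thesis using OS2[OF sw1 s1 x2 a31M1 x1 x3] .
      next
        case nE3: False
        have d3: "a3 \<noteq> a0" using nE3 F1 by (metis insert_commute)
        have d4: "b3 \<noteq> b0"
        proof
          assume "b3 = b0"
          then have "a3 = a0" using mate_uniq2[OF pS s3, of a0] e0 by simp
          then show False using d3 by simp
        qed
        have d5: "b3 \<noteq> a1"
        proof
          assume "b3 = a1"
          then have "b1 = a3" using mate_uniq3[OF pS s1, of a3] s3 by simp
          then show False using db1a3 by simp
        qed
        have d6: "a3 \<noteq> a2"
        proof
          assume "a3 = a2"
          then show False using djs2[OF m2] s2 by simp
        qed
        have d7: "a3 \<noteq> b2" using nM[OF m2] by simp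
        have db3b2: "b3 \<noteq> b2"
        proof
          assume "b3 = b2"
          then have "a3 = a2" using mate_uniq2[OF pS s3, of a2] s2 by simp
          then show False using d6 by simp
        qed
        show ?thesis
        proof (cases "{a1,a4}\<in>E")
          case True
          have "{b3,a4} \<noteq> {a1,b0}" using d5 d4 by (metis insertCI insertE singletonD)
          moreover have "{b3,a4} \<noteq> {b2,a3}" using db3b2 nS[OF s3] by (metis insertCI insertE singletonD)
          ultimately have x1: "{b3,a4} \<in> M1" using inM1 m3 by blast
          have da3b0: "a3 \<noteq> b0"
          proof
            assume "a3 = b0"
            then have "a1 = b2" using mate_uniq3[OF pM m0, of b2] m2 by simp
            then show False using d1 by simp
          qed
          have "{a3,b3}\<notin>M" using disj s3 by blast
          moreover have "{a3,b3} \<noteq> {b0,b2}" using da3b0 d7 by (metis insertCI insertE singletonD)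
          moreover have "{a3,b3} \<noteq> {a3,a1}" using d5 pair_eq_uniq by metis
          ultimately have x2: "{a3,b3} \<notin> M1" unfolding M1_def by blast
          have x0: "{a1,a3} \<in> M1" using a31M1 by (simp add: insert_commute)
          show ?thesis using OS2[OF sw1 s3 x2 x0 x1 True] .
        next
          case nE4: False
          have ne23: "{a2,b2} \<noteq> {a3,b3}" using d6 d7 by (metis insertCI insertE singletonD)
          have X1: "{b3,a2}\<in>E"
            using Pcases[OF P s2 s3 ne23] nE3 by (metis insert_commute)
          have d8: "a4 \<noteq> a1"
          proof
            assume "a4 = a1"
            then have "b3 = b0" using mate_uniq2[OF pM m3, of b0] m0 by simp
            then show False using d4 by simp
          qed
          have d9: "a4 \<noteq> b1"
          proof
            assume "a4 = b1"
            then have "a2 = b3" using mate_uniq3[OF pM m1, of b3] m3 by simp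
            then have "b2 = a3" using mate_uniq3[OF pS s2, of a3] s3 by simp
            then show False using d7 by simp
          qed
          have ne14: "{a1,b1} \<noteq> {a4,b4}" using d8 d9 by (metis insertCI insertE singletonD)
          have X2: "{b1,a4}\<in>E"
            using Pcases[OF P s1 s4 ne14] nE4 by blast
          have d10: "a2 \<noteq> a4"
          proof
            assume "a2 = a4"
            then have "b3 = b1" using mate_uniq2[OF pM m3, of b1] m1 by simp
            then have "a3 = a1" using mate_uniq2[OF pS s3, of a1] s1 by simp
            then show False using d2 by simp
          qed
          have d11: "a2 \<noteq> b3"
          proof
            assume "a2 = b3"
            then have "b2 = a3" using mate_uniq3[OF pS s2, of a3] s3 by simp
            then show False using d7 by simp
          qed
          have ne2: "{a2,b1} \<noteq> {a4,b3}" using d10 d11 by (metis insertCI insertE singletonD)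
          have m1c: "{a2,b1}\<in>M" using m1 by (simp add: insert_commute)
          have m3c: "{a4,b3}\<in>M" using m3 by (simp add: insert_commute)
          define M2 where "M2 = M - {{a2,b1},{a4,b3}} \<union> {{b1,a4},{b3,a2}}"
          have sw2: "matching_2switch E M M2"
            unfolding M2_def using sw_intro[OF pM c2 m1c m3c ne2 X2 X1] .
          have db2a4: "b2 \<noteq> a4"
          proof
            assume "b2 = a4"
            then have "a3 = b3" using mate_uniq3[OF pM m2, of b3] m3 by simp
            then show False using nS[OF s3] by simp
          qed
          have "{b2,a3} \<noteq> {a2,b1}" using nS[OF s2] db1b2 by (metis insertCI insertE singletonD)
          moreover have "{b2,a3} \<noteq> {a4,b3}" using db2a4 db3b2 by (metis insertCI insertE singletonD)
          ultimately have x1: "{b2,a3} \<in> M2" using m2 unfolding M2_def by blast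
          have "{a2,b2}\<notin>M" using disj s2 by blast
          moreover have "{a2,b2} \<noteq> {b1,a4}" using nM[OF m1] d10 by (metis insertCI insertE singletonD)
          moreover have "{a2,b2} \<noteq> {b3,a2}" using db3b2 nS[OF s2] by (metis insertCI insertE singletonD)
          ultimately have x2: "{a2,b2} \<notin> M2" unfolding M2_def by blast
          have x0: "{b3,a2} \<in> M2" unfolding M2_def by blast
          show ?thesis using OS2[OF sw2 s2 x2 x0 x1 SEc[OF s3]] .
        qed
      qed
    qed
  qed
qed



lemma pmx_empty: assumes "pmx E {} M" "\<forall>e\<in>E. card e = 2" shows "M = {}"
proof (rule ccontr)
  assume "M \<noteq> {}"
  then obtain e where e: "e\<in>M" by blast
  then have "e = {}" using assms(1) unfolding pmx_def by blast
  moreover have "card e = 2" using e assms pmx_E by blast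
  ultimately show False by simp
qed

lemma main_ind:
  assumes "finite V" "\<forall>e\<in>E. card e = 2" "pmx E V Ms" "Pprop E Ms" "pmx E V M"
  shows "(matching_2switch E)\<^sup>*\<^sup>* M Ms"
  using assms
proof (induction "card V" arbitrary: V Ms M rule: less_induct)
  case less
  note fin = less.prems(1) and c2 = less.prems(2) and pS = less.prems(3) and P = less.prems(4)
    and pM = less.prems(5)
  have case1: "(matching_2switch E)\<^sup>*\<^sup>* M' Ms" if pM': "pmx E V M'" and ne: "M' \<inter> Ms \<noteq> {}" for M'
  proof -
    obtain e where e: "e \<in> M'" "e \<in> Ms" using ne by blast
    have eV: "e \<subseteq> V" using pS e unfolding pmx_def by blast
    have "card e = 2" using c2 pmx_E[OF pS] e by blast
    then have en: "e \<noteq> {}" by auto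
    have "V - e \<subset> V" using eV en by blast
    then have lt: "card (V - e) < card V" using fin by (simp add: psubset_card_mono)
    have r1: "pmx E (V - e) (Ms - {e})" using pmx_remove[OF pS e(2)] .
    have r2: "pmx E (V - e) (M' - {e})" using pmx_remove[OF pM' e(1)] .
    have "Pprop E (Ms - {e})" using Pprop_sub[OF P] by blast
    then have "(matching_2switch E)\<^sup>*\<^sup>* (M' - {e}) (Ms - {e})"
      using less.hyps[OF lt _ c2 r1 _ r2] fin by blast
    moreover have "\<forall>f\<in>M' - {e}. f \<subseteq> V - e" using r2 unfolding pmx_def by blast
    ultimately have "(matching_2switch E)\<^sup>*\<^sup>* (insert e (M' - {e})) (insert e (Ms - {e}))"
      using sw_lift_rt[of E "M' - {e}" "Ms - {e}" "V - e" e] en by blast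
    then show ?thesis using e by (simp add: insert_absorb)
  qed
  show ?case
  proof (cases "M \<inter> Ms = {}")
    case False then show ?thesis using case1[OF pM] by blast
  next
    case disj: True
    show ?thesis
    proof (cases "Ms = {}")
      case True
      have "V = {}"
      proof (rule ccontr)
        assume "V \<noteq> {}"
        then obtain v where "v \<in> V" by blast
        then show False using pS True unfolding pmx_def by blast
      qed
      then have "M = {}" using pmx_empty c2 pM by blast
      then show ?thesis using True by simp
    next
      case False
      then obtain e0 where e0: "e0 \<in> Ms" by blast
      then have "card e0 = 2" using c2 pmx_E[OF pS] by blast
      then obtain a0 b0 where "e0 = {a0,b0}" by (meson card_2_iff)
      then have e0': "{a0,b0}\<in>Ms" using e0 by simp
      obtain M' where M': "(matching_2switch E)\<^sup>*\<^sup>* M M'" "pmx E V M'" "M' \<inter> Ms \<noteq> {}"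
        using local_step[OF pM pS c2 P disj e0'] by blast
      show ?thesis using case1[OF M'(2,3)] M'(1) by (meson rtranclp_trans)
    qed
  qed
qed

lemma pmx_of_pm: "simple_graph V E \<Longrightarrow> perfect_matching V E M \<Longrightarrow> pmx E V M"
  unfolding simple_graph_def perfect_matching_def pmx_def by blast

lemma pmx_card:
  assumes pm: "pmx E V M" and fin: "finite V" and c2: "\<forall>e\<in>E. card e = 2"
  shows "card V = 2 * card M"
proof -
  have U: "\<Union>M = V"
  proof
    show "\<Union>M \<subseteq> V" using pm unfolding pmx_def by blast
    show "V \<subseteq> \<Union>M" using pm unfolding pmx_def by blast
  qed
  have finM: "finite M"
  proof -
    have "M \<subseteq> Pow V" using pm unfolding pmx_def by blast
    then show ?thesis using fin by (meson finite_Pow_iff finite_subset)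
  qed
  have pw: "pairwise disjnt M"
    unfolding pairwise_def disjnt_def using pmx_uniq[OF pm] by blast
  have fa: "\<And>A. A \<in> M \<Longrightarrow> finite A" using pm fin unfolding pmx_def by (meson finite_subset)
  have "card (\<Union>M) = sum card M" using card_Union_disjoint[OF pw fa] by blast
  also have "\<dots> = sum (\<lambda>_. 2) M" using c2 pmx_E[OF pm] by (intro sum.cong) auto
  also have "\<dots> = 2 * card M" by simp
  finally show ?thesis using U by simp
qed

lemma pmx_sub_eq:
  assumes pM: "pmx E V M'" and pS: "pmx E V Ms" and c2: "\<forall>e\<in>E. card e = 2" and sub: "Ms \<subseteq> M'"
  shows "M' = Ms"
proof
  show "Ms \<subseteq> M'" using sub .
  show "M' \<subseteq> Ms"
  proof
    fix h assume h: "h \<in> M'"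
    have "card h = 2" using h c2 pmx_E[OF pM] by blast
    then obtain v where v: "v \<in> h" by fastforce
    have "v \<in> V" using h v pM unfolding pmx_def by blast
    then obtain k where k: "k \<in> Ms" "v \<in> k" using pS unfolding pmx_def by blast
    have "h = k" using pmx_uniq[OF pM h, of k v] k sub v by blast
    then show "h \<in> Ms" using k by simp
  qed
qed

lemma partner_in:
  assumes pM: "pmx E V M'" and pS: "pmx E V Ms" and sub: "Ms - {e,f} \<subseteq> M'"
    and ef: "e \<in> Ms" "f \<in> Ms" and vw: "{v,w} \<in> M'" and v: "v \<in> e \<union> f"
  shows "w \<in> e \<union> f"
proof (rule ccontr)
  assume nw: "w \<notin> e \<union> f"
  have "w \<in> V" using pmx_V[OF pM vw] by blast
  then obtain h where h: "h \<in> Ms" "w \<in> h" using pS unfolding pmx_def by blast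
  have "h \<noteq> e" "h \<noteq> f" using h nw by blast+
  then have "h \<in> M'" using sub h by blast
  then have "h = {v,w}" using pmx_uniq[OF pM _ vw, of h w] h by blast
  then have "v \<in> h" by simp
  then have "h = e \<or> h = f" using v pmx_uniq[OF pS h(1)] ef by blast
  then show False using \<open>h\<noteq>e\<close> \<open>h\<noteq>f\<close> by blast
qed



lemma P_from_forcing:
  assumes sg: "simple_graph V E" and cV: "card V = 2*n" and pS0: "perfect_matching V E Ms"
    and fn: "forcing_number V E Ms = n - 1"
  shows "Pprop E Ms"
proof -
  have fin: "finite V" and c2: "\<forall>e\<in>E. card e = 2" using sg unfolding simple_graph_def by blast+
  have pS: "pmx E V Ms" using pmx_of_pm[OF sg pS0] .
  have cM: "card Ms = n" using pmx_card[OF pS fin c2] cV by simp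
  have finMs: "finite Ms"
  proof -
    have "Ms \<subseteq> Pow V" using pS unfolding pmx_def by blast
    then show ?thesis using fin by (meson finite_Pow_iff finite_subset)
  qed
  show ?thesis unfolding Pprop_def
  proof (intro ballI impI)
    fix e f assume e: "e\<in>Ms" and f: "f\<in>Ms" and ne: "e\<noteq>f"
    define S where "S = Ms - {e,f}"
    have efs: "{e,f} \<subseteq> Ms" using e f by blast
    have cef: "card {e,f} = 2" using ne by simp
    have cS: "card S = n - 2" unfolding S_def using card_Diff_subset[OF _ efs] cef cM finMs
      by (metis finite_subset efs)
    have n2: "n \<ge> 2" using card_mono[OF finMs efs] cef cM by simp
    have notf: "\<not> forcing_set V E Ms S"
    proof
      assume fs: "forcing_set V E Ms S"
      have "forcing_number V E Ms \<le> n - 2" unfolding forcing_number_def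
        apply (rule Least_le) using fs cS by blast
      then show False using fn n2 by simp
    qed
    then obtain M' where M': "perfect_matching V E M'" "S \<subseteq> M'" "M' \<noteq> Ms"
      unfolding forcing_set_def S_def by blast
    have pM: "pmx E V M'" using pmx_of_pm[OF sg M'(1)] .
    have sub: "Ms - {e,f} \<subseteq> M'" using M'(2) unfolding S_def .
    have dj: "e \<inter> f = {}" using pmx_uniq[OF pS e f] ne by blast
    have "card e = 2" using c2 pmx_E[OF pS] e by blast
    then obtain a b where ab: "e = {a,b}" "a \<noteq> b" by (meson card_2_iff)
    have "card f = 2" using c2 pmx_E[OF pS] f by blast
    then obtain c d where cd: "f = {c,d}" "c \<noteq> d" by (meson card_2_iff)
    have eM: "e \<notin> M'"
    proof
      assume eM: "e \<in> M'"
      have "c \<in> V" using pS f cd unfolding pmx_def by blast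
      then obtain u where u: "{c,u} \<in> M'" using mate_ex[OF pM c2] by blast
      have "u \<in> e \<union> f" using partner_in[OF pM pS sub e f u] cd by blast
      moreover have "u \<notin> e"
      proof
        assume "u \<in> e"
        then have "{c,u} = e" using pmx_uniq[OF pM u eM, of u] by blast
        then show False using dj cd by blast
      qed
      moreover have "u \<noteq> c" using card2_neq[OF c2] u pmx_E[OF pM] by blast
      ultimately have "u = d" using cd by blast
      then have "f \<in> M'" using u cd by simp
      then have "Ms \<subseteq> M'" using sub eM by blast
      then show False using pmx_sub_eq[OF pM pS c2] M'(3) by blast
    qed
    have "a \<in> V" using pS e ab unfolding pmx_def by blast
    then obtain w where w: "{a,w} \<in> M'" using mate_ex[OF pM c2] by blast
    have "b \<in> V" using pS e ab unfolding pmx_def by blast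
    then obtain w' where w': "{b,w'} \<in> M'" using mate_ex[OF pM c2] by blast
    have wef: "w \<in> e \<union> f" using partner_in[OF pM pS sub e f w] ab by blast
    have w'ef: "w' \<in> e \<union> f" using partner_in[OF pM pS sub e f w'] ab by blast
    have "w \<noteq> a" using card2_neq[OF c2] w pmx_E[OF pM] by blast
    moreover have "w \<noteq> b" using w eM ab by auto
    ultimately have wf: "w \<in> {c,d}" using wef ab cd by blast
    have "w' \<noteq> b" using card2_neq[OF c2] w' pmx_E[OF pM] by blast
    moreover have "w' \<noteq> a" using w' eM ab by (auto simp: insert_commute)
    ultimately have w'f: "w' \<in> {c,d}" using w'ef ab cd by blast
    have "w \<noteq> w'"
    proof
      assume "w = w'"
      then have "a = b" using mate_uniq2[OF pM, of a w b] w w' by (simp add: insert_commute)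
      then show False using ab by simp
    qed
    then have "(w = c \<and> w' = d) \<or> (w = d \<and> w' = c)" using wf w'f by blast
    then show "\<exists>a b c d. e = {a, b} \<and> f = {c, d} \<and> {a, c} \<in> E \<and> {b, d} \<in> E"
    proof
      assume "w = c \<and> w' = d"
      then show ?thesis using ab cd w w' pmx_E[OF pM] by blast
    next
      assume "w = d \<and> w' = c"
      then have "f = {d,c}" "{a,d}\<in>E" "{b,c}\<in>E" using cd w w' pmx_E[OF pM] by (auto simp: insert_commute)
      then show ?thesis using ab by blast
    qed
  qed
qed

theorem mainTheorem11:
  fixes V :: "'a set" and E :: "'a set set" and Ms :: "'a set set" and n :: nat
  assumes "n \<ge> 1"
    and "simple_graph V E"
    and "card V = 2 * n"
    and "perfect_matching V E Ms"
    and "forcing_number V E Ms = n - 1"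
  shows "\<forall>M. perfect_matching V E M \<longrightarrow> (matching_2switch E)\<^sup>*\<^sup>* M Ms"
proof (intro allI impI)
  fix M assume M: "perfect_matching V E M"
  have fin: "finite V" and c2: "\<forall>e\<in>E. card e = 2" using assms(2) unfolding simple_graph_def by blast+
  have P: "Pprop E Ms" using P_from_forcing[OF assms(2,3,4,5)] .
  show "(matching_2switch E)\<^sup>*\<^sup>* M Ms"
    using main_ind[OF fin c2 pmx_of_pm[OF assms(2,4)] P pmx_of_pm[OF assms(2) M]] .
qed

end
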